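(* Let $K\ge2$, $p_1,\dots,p_K\in[0,1]$, $\alpha\in[0,1]$, and let $F:\bigcup_{n\ge1}[0,1]^n\to[0,1]$ be a symmetric function. All sets $I,J$ below are nonempty subsets of $\{1,\dots,K\}$. Let \[ \mathcal U:=\{I: F(p_i:i\in I)\le\alpha\},\qquad \mathcal X:=\{I:\ J\in\mathcal U\text{ for all }J\supseteq I\}, \] and for nonempty $R\subseteq\{1,\dots,K\}$ let $t_\alpha(R):=\max\{|I|: I\subseteq R,\ I\notin\mathcal X\}$ (with $\max\emptyset:=0$) and $f_\alpha(R):=|R|-t_\alpha(R)$. Define \[ D_p^R(j):=\max_{J:\ |R\setminus J|<j}F(p_i:i\in J). \] Then for every nonempty $R$ and every $j\in\{1,\dots,|R|\}$, \[ f_\alpha(R)\ge j\iff D_p^R(j)\le\alpha . \]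
   Context: Symmetric means the value of $F$ does not depend on the order of its arguments. (In the paper $F$ is a symmetric \textit{p}-merging function, but the equivalence uses only the stated definitions.) *)

theory Defs
  imports Complex_Main "HOL-Library.Multiset"
begin

text \<open>A function on finite tuples is modelled as a function on lists of reals;
  F(p_i : i in I) is F applied to the p-values indexed by I (in increasing order
  of index; by symmetry the order is irrelevant).\<close>

definition Fset :: "(real list \<Rightarrow> real) \<Rightarrow> (nat \<Rightarrow> real) \<Rightarrow> nat set \<Rightarrow> real" where
  "Fset F p I = F (map p (sorted_list_of_set I))"

definition symmetric_fun :: "(real list \<Rightarrow> real) \<Rightarrow> bool" where
  "symmetric_fun F \<longleftrightarrow> (\<forall>xs ys. mset xs = mset ys \<longrightarrow> F xs = F ys)"

definition idxsets :: "nat \<Rightarrow> nat set set" where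
  "idxsets K = {I. I \<subseteq> {1..K} \<and> I \<noteq> {}}"

definition Uset :: "nat \<Rightarrow> (real list \<Rightarrow> real) \<Rightarrow> (nat \<Rightarrow> real) \<Rightarrow> real \<Rightarrow> nat set set" where
  "Uset K F p \<alpha> = {I \<in> idxsets K. Fset F p I \<le> \<alpha>}"

definition Xset :: "nat \<Rightarrow> (real list \<Rightarrow> real) \<Rightarrow> (nat \<Rightarrow> real) \<Rightarrow> real \<Rightarrow> nat set set" where
  "Xset K F p \<alpha> = {I \<in> idxsets K. \<forall>J \<in> idxsets K. I \<subseteq> J \<longrightarrow> J \<in> Uset K F p \<alpha>}"

definition t_alpha :: "nat \<Rightarrow> (real list \<Rightarrow> real) \<Rightarrow> (nat \<Rightarrow> real) \<Rightarrow> real \<Rightarrow> nat set \<Rightarrow> nat" where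
  "t_alpha K F p \<alpha> R = Max (insert 0 {card I | I. I \<in> idxsets K \<and> I \<subseteq> R \<and> I \<notin> Xset K F p \<alpha>})"

definition f_alpha :: "nat \<Rightarrow> (real list \<Rightarrow> real) \<Rightarrow> (nat \<Rightarrow> real) \<Rightarrow> real \<Rightarrow> nat set \<Rightarrow> int" where
  "f_alpha K F p \<alpha> R = int (card R) - int (t_alpha K F p \<alpha> R)"

definition D_p :: "nat \<Rightarrow> (real list \<Rightarrow> real) \<Rightarrow> (nat \<Rightarrow> real) \<Rightarrow> nat set \<Rightarrow> nat \<Rightarrow> real" where
  "D_p K F p R j = Max {Fset F p J | J. J \<in> idxsets K \<and> card (R - J) < j}"

end

theory Submission
  imports Defs
begin

theorem mainTheorem7:
  fixes K :: nat and p :: "nat \<Rightarrow> real" and \<alpha> :: real and F :: "real list \<Rightarrow> real"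
    and R :: "nat set" and j :: nat
  assumes "K \<ge> 2"
    and "\<forall>i \<in> {1..K}. 0 \<le> p i \<and> p i \<le> 1"
    and "0 \<le> \<alpha>" and "\<alpha> \<le> 1"
    and "\<forall>xs. xs \<noteq> [] \<and> set xs \<subseteq> {0..1} \<longrightarrow> 0 \<le> F xs \<and> F xs \<le> 1"
    and "symmetric_fun F"
    and "R \<subseteq> {1..K}" and "R \<noteq> {}"
    and "1 \<le> j" and "j \<le> card R"
  shows "f_alpha K F p \<alpha> R \<ge> int j \<longleftrightarrow> D_p K F p R j \<le> \<alpha>"
proof -
  have finR: "finite R" using assms(7) finite_subset by blast
  define S where "S = {card I | I. I \<in> idxsets K \<and> I \<subseteq> R \<and> I \<notin> Xset K F p \<alpha>}"
  have Sfin: "finite S"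
  proof -
    have "S \<subseteq> {0..card R}" unfolding S_def using finR by (auto intro: card_mono)
    thus ?thesis using finite_subset by blast
  qed
  have fiff: "f_alpha K F p \<alpha> R \<ge> int j \<longleftrightarrow> (\<forall>s\<in>S. s \<le> card R - j)"
  proof -
    have "f_alpha K F p \<alpha> R \<ge> int j \<longleftrightarrow> t_alpha K F p \<alpha> R \<le> card R - j"
      unfolding f_alpha_def using assms(10) by linarith
    also have "\<dots> \<longleftrightarrow> (\<forall>s\<in>S. s \<le> card R - j)"
      unfolding t_alpha_def S_def[symmetric] using Sfin by simp
    finally show ?thesis .
  qed
  define JS where "JS = {J. J \<in> idxsets K \<and> card (R - J) < j}"
  have JSfin: "finite JS" unfolding JS_def idxsets_def
    by (rule finite_subset[of _ "Pow {1..K}"]) auto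
  have "R \<in> JS" unfolding JS_def idxsets_def using assms by auto
  have Diff: "D_p K F p R j \<le> \<alpha> \<longleftrightarrow> (\<forall>J\<in>JS. Fset F p J \<le> \<alpha>)"
  proof -
    have eq: "{Fset F p J | J. J \<in> idxsets K \<and> card (R - J) < j} = (Fset F p) ` JS"
      unfolding JS_def by auto
    show ?thesis unfolding D_p_def eq using JSfin \<open>R \<in> JS\<close> by (subst Max_le_iff) auto
  qed
  show ?thesis unfolding fiff Diff
  proof
    assume H: "\<forall>s\<in>S. s \<le> card R - j"
    show "\<forall>J\<in>JS. Fset F p J \<le> \<alpha>"
    proof
      fix J assume J: "J \<in> JS"
      define I where "I = R \<inter> J"
      have cRJ: "card R = card I + card (R - J)" unfolding I_def
        using finR card_Int_Diff[of R J] by (simp add: Int_commute)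
      have lt: "card (R - J) < j" using J unfolding JS_def by auto
      have Igt: "card I > card R - j" using cRJ lt assms(10) by linarith
      hence "I \<noteq> {}" by auto
      hence Iid: "I \<in> idxsets K" unfolding I_def idxsets_def using assms(7) by auto
      have "I \<in> Xset K F p \<alpha>"
      proof (rule ccontr)
        assume "I \<notin> Xset K F p \<alpha>"
        hence "card I \<in> S" unfolding S_def using Iid I_def by auto
        with H Igt show False by fastforce
      qed
      moreover have "J \<in> idxsets K" using J unfolding JS_def by auto
      ultimately have "J \<in> Uset K F p \<alpha>" unfolding Xset_def I_def by auto
      thus "Fset F p J \<le> \<alpha>" unfolding Uset_def by auto
    qed
  next
    assume H: "\<forall>J\<in>JS. Fset F p J \<le> \<alpha>"
    show "\<forall>s\<in>S. s \<le> card R - j"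
    proof
      fix s assume "s \<in> S"
      then obtain I where I: "s = card I" "I \<in> idxsets K" "I \<subseteq> R" "I \<notin> Xset K F p \<alpha>"
        unfolding S_def by auto
      show "s \<le> card R - j"
      proof (rule ccontr)
        assume "\<not> s \<le> card R - j"
        hence gt: "card I > card R - j" using I by simp
        have "I \<in> Xset K F p \<alpha>" unfolding Xset_def
        proof (intro CollectI conjI ballI impI)
          show "I \<in> idxsets K" by fact
          fix J assume J: "J \<in> idxsets K" "I \<subseteq> J"
          have "card (R - J) \<le> card (R - I)" using finR J by (intro card_mono) auto
          also have "\<dots> = card R - card I" using finR I(3) by (simp add: card_Diff_subset finite_subset)
          finally have "card (R - J) < j" using gt assms(10) card_mono[OF finR I(3)] by linarith
          hence "J \<in> JS" unfolding JS_def using J by auto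
          thus "J \<in> Uset K F p \<alpha>" using H J unfolding Uset_def by auto
        qed
        with I show False by simp
      qed
    qed
  qed
qed

end
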